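(* Let $\psi$ be an additive character of $\mathbb{F}_{q^2}$ of conductor $q^2$. If $\nu$ is any character of $H'$ whose restriction to $H_0'$ equals $\widetilde\psi$, then the representation $\mathrm{Ind}_{H'}^{\mathcal U}(\nu)$ is irreducible.
   Context: Let $p$ be a prime, $q$ a power of $p$, $\ell\ne p$, and $h\ge2$ an integer; representations are over $\overline{\mathbb{Q}}_\ell$. For a commutative $\mathbb{F}_q$-algebra $A$, $U_h^{2,q}(A)$ is the set of formal expressions $1+\sum_{i=1}^{2(h-1)}a_i\tau^i$ ($a_i\in A$) with multiplication obtained by extending $(a\tau^i)(b\tau^j)=ab^{q^i}\tau^{i+j}$ bi-additively, $\tau^0=1$, $\tau^k=0$ for $k>2(h-1)$. In $\mathcal U=U_h^{2,q}(\mathbb{F}_{q^2})$ define $H_0'=\{1+\sum a_i\tau^i: a_i=0\text{ unless } i=2(h-1)\text{ or } i\text{ is odd with } i>h-1\}$; if $h$ is odd, $H'=\{1+\sum a_i\tau^i: a_i=0\text{ for all odd } i\le h-1\}$; if $h$ is even, $H'=\{1+\sum a_i\tau^i: a_i=0\text{ for odd } i<h-1,\ a_{h-1}\in\mathbb{F}_q\}$. An additive character $\psi\colon\mathbb{F}_{q^2}\to\overline{\mathbb{Q}}_\ell^\times$ has conductor $q^2$ if there exists $x$ with $\psi(x^q)\ne\psi(x)$; $\widetilde\psi$ is the character $1+\sum a_i\tau^i\mapsto\psi(a_{2(h-1)})$ of $H_0'$. *)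

theory Defs
  imports "HOL-Computational_Algebra.Polynomial"
begin

text \<open>Elements of U_h^{2,q}(A) with A = the finite field 'a are encoded as coefficient
  sequences a :: nat => 'a with a 0 = 1 and a i = 0 for i > 2(h-1); the sequence a stands
  for 1 + sum a_i tau^i.\<close>

definition U_carrier :: "nat \<Rightarrow> (nat \<Rightarrow> 'a::field) set" where
  "U_carrier h = {a. a 0 = 1 \<and> (\<forall>i. i > 2*(h-1) \<longrightarrow> a i = 0)}"

text \<open>Multiplication: (sum a_i tau^i)(sum b_j tau^j) = sum_k (sum_{i<=k} a_i b_{k-i}^{q^i}) tau^k,
  truncated at degree 2(h-1).\<close>
definition U_mult :: "nat \<Rightarrow> nat \<Rightarrow> (nat \<Rightarrow> 'a::field) \<Rightarrow> (nat \<Rightarrow> 'a) \<Rightarrow> (nat \<Rightarrow> 'a)" where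
  "U_mult q h a b = (\<lambda>k. if k \<le> 2*(h-1) then (\<Sum>i\<le>k. a i * (b (k-i)) ^ (q^i)) else 0)"

definition H0' :: "nat \<Rightarrow> (nat \<Rightarrow> 'a::field) set" where
  "H0' h = {a \<in> U_carrier h. \<forall>i. a i \<noteq> 0 \<and> i \<ge> 1 \<longrightarrow>
              i = 2*(h-1) \<or> (odd i \<and> i > h-1)}"

definition H' :: "nat \<Rightarrow> nat \<Rightarrow> (nat \<Rightarrow> 'a::field) set" where
  "H' q h = (if odd h
     then {a \<in> U_carrier h. \<forall>i. odd i \<and> i \<le> h-1 \<longrightarrow> a i = 0}
     else {a \<in> U_carrier h. (\<forall>i. odd i \<and> i < h-1 \<longrightarrow> a i = 0) \<and> (a (h-1)) ^ q = a (h-1)})"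

definition additive_character :: "('a::field \<Rightarrow> 'k::field) \<Rightarrow> bool" where
  "additive_character \<psi> \<longleftrightarrow> (\<forall>x y. \<psi> (x + y) = \<psi> x * \<psi> y) \<and> (\<forall>x. \<psi> x \<noteq> 0)"

definition has_conductor_q2 :: "nat \<Rightarrow> ('a::field \<Rightarrow> 'k::field) \<Rightarrow> bool" where
  "has_conductor_q2 q \<psi> \<longleftrightarrow> (\<exists>x. \<psi> (x ^ q) \<noteq> \<psi> x)"

definition is_character_on :: "('g \<Rightarrow> 'g \<Rightarrow> 'g) \<Rightarrow> 'g set \<Rightarrow> ('g \<Rightarrow> 'k::field) \<Rightarrow> bool" where
  "is_character_on mul H \<nu> \<longleftrightarrow>
     (\<forall>x\<in>H. \<nu> x \<noteq> 0) \<and> (\<forall>x\<in>H. \<forall>y\<in>H. \<nu> (mul x y) = \<nu> x * \<nu> y)"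

definition ind_space :: "('g \<Rightarrow> 'g \<Rightarrow> 'g) \<Rightarrow> 'g set \<Rightarrow> 'g set \<Rightarrow> ('g \<Rightarrow> 'k::field) \<Rightarrow> ('g \<Rightarrow> 'k) set" where
  "ind_space mul G H \<nu> = {f. (\<forall>g. g \<notin> G \<longrightarrow> f g = 0) \<and>
      (\<forall>h\<in>H. \<forall>g\<in>G. f (mul h g) = \<nu> h * f g)}"

definition right_transl :: "('g \<Rightarrow> 'g \<Rightarrow> 'g) \<Rightarrow> 'g set \<Rightarrow> 'g \<Rightarrow> ('g \<Rightarrow> 'k::field) \<Rightarrow> ('g \<Rightarrow> 'k)" where
  "right_transl mul G x f = (\<lambda>g. if g \<in> G then f (mul g x) else 0)"

definition invariant_subspace ::
  "('g \<Rightarrow> 'g \<Rightarrow> 'g) \<Rightarrow> 'g set \<Rightarrow> ('g \<Rightarrow> 'k::field) set \<Rightarrow> bool" where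
  "invariant_subspace mul G W \<longleftrightarrow>
     (\<lambda>_. 0) \<in> W \<and> (\<forall>f\<in>W. \<forall>f'\<in>W. (\<lambda>g. f g + f' g) \<in> W) \<and>
     (\<forall>c. \<forall>f\<in>W. (\<lambda>g. c * f g) \<in> W) \<and>
     (\<forall>x\<in>G. \<forall>f\<in>W. right_transl mul G x f \<in> W)"

definition induced_irreducible :: "('g \<Rightarrow> 'g \<Rightarrow> 'g) \<Rightarrow> 'g set \<Rightarrow> 'g set \<Rightarrow> ('g \<Rightarrow> 'k::field) \<Rightarrow> bool" where
  "induced_irreducible mul G H \<nu> \<longleftrightarrow>
     ind_space mul G H \<nu> \<noteq> {\<lambda>_. 0} \<and>
     (\<forall>W. W \<subseteq> ind_space mul G H \<nu> \<and> invariant_subspace mul G W \<longrightarrow>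
          W = {\<lambda>_. 0} \<or> W = ind_space mul G H \<nu>)"

definition algebraically_closed :: "'k::field itself \<Rightarrow> bool" where
  "algebraically_closed _ \<longleftrightarrow> (\<forall>p :: 'k poly. degree p > 0 \<longrightarrow> (\<exists>x. poly p x = 0))"

end

theory Submission
  imports Defs "HOL-Number_Theory.Residues"
begin


lemma (in group) finite_closed_subgroup:
  assumes fin: "finite S" and sub: "S \<subseteq> carrier G" and ne: "S \<noteq> {}"
    and cl: "\<And>a b. a \<in> S \<Longrightarrow> b \<in> S \<Longrightarrow> a \<otimes> b \<in> S"
  shows "subgroup S G"
proof (rule subgroupI[OF sub ne])
  fix a b assume "a \<in> S" "b \<in> S" thus "a \<otimes> b \<in> S" by (rule cl)
next
  fix x assume x: "x \<in> S"
  hence xG: "x \<in> carrier G" using sub by auto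
  have inj: "inj_on (\<lambda>y. x \<otimes> y) S"
  proof (rule inj_onI)
    fix a b assume "a \<in> S" "b \<in> S" "x \<otimes> a = x \<otimes> b"
    thus "a = b" using sub xG Units_l_cancel[of x a b] by auto
  qed
  have im: "(\<lambda>y. x \<otimes> y) ` S = S"
    by (rule card_subset_eq[OF fin]) (use cl x inj card_image in auto)
  have "x \<in> (\<lambda>y. x \<otimes> y) ` S" using im x by simp
  then obtain y where y: "y \<in> S" "x \<otimes> y = x" by auto
  hence "y = \<one>" using sub xG by auto
  hence one: "\<one> \<in> S" using y by simp
  hence "\<one> \<in> (\<lambda>y. x \<otimes> y) ` S" using im by simp
  then obtain z where z: "z \<in> S" "x \<otimes> z = \<one>" by auto
  have zG: "z \<in> carrier G" using z sub by auto
  have "inv x \<otimes> (x \<otimes> z) = inv x" using z xG by simp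
  moreover have "inv x \<otimes> (x \<otimes> z) = z" using xG zG by (simp add: m_assoc[symmetric])
  ultimately have "z = inv x" by simp
  thus "inv x \<in> S" using z by simp
qed

lemma W_sum_closed:
  assumes "invariant_subspace mul G W" "finite A" "\<And>a. a \<in> A \<Longrightarrow> \<phi> a \<in> W"
  shows "(\<lambda>g. \<Sum>a\<in>A. \<phi> a g) \<in> W"
  using assms(2,3)
proof (induction A rule: finite_induct)
  case empty thus ?case using assms(1) by (simp add: invariant_subspace_def)
next
  case (insert x F)
  have add: "\<And>f f'. f \<in> W \<Longrightarrow> f' \<in> W \<Longrightarrow> (\<lambda>g. f g + f' g) \<in> W"
    using assms(1) unfolding invariant_subspace_def by blast
  have "(\<lambda>g. \<phi> x g + (\<Sum>a\<in>F. \<phi> a g)) \<in> W"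
    by (rule add) (use insert in auto)
  thus ?case using insert by simp
qed
lemma mackey_irred:
  fixes G (structure) and \<nu> :: "'g \<Rightarrow> 'k::field_char_0"
  assumes grp: "group G" and fin: "finite (carrier G)" and sg: "subgroup H G"
    and chi: "is_character_on (mult G) H \<nu>"
    and key: "\<And>g. g \<in> carrier G \<Longrightarrow> g \<notin> H \<Longrightarrow>
        \<exists>x\<in>H. \<exists>y\<in>H. g \<otimes> x = y \<otimes> g \<and> \<nu> x \<noteq> \<nu> y"
  shows "induced_irreducible (mult G) (carrier G) H \<nu>"
proof -
  interpret group G by (rule grp)
  interpret subgroup H G by (rule sg)
  have Hsub: "H \<subseteq> carrier G" by (rule subset)
  have finH: "finite H" using fin Hsub finite_subset by blast
  have nz: "\<And>x. x \<in> H \<Longrightarrow> \<nu> x \<noteq> 0" and nmul: "\<And>x y. x \<in> H \<Longrightarrow> y \<in> H \<Longrightarrow> \<nu> (x \<otimes> y) = \<nu> x * \<nu> y"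
    using chi unfolding is_character_on_def by auto
  have nu1: "\<nu> \<one> = 1"
  proof -
    have "\<nu> \<one> = \<nu> \<one> * \<nu> \<one>" using nmul[of \<one> \<one>] by simp
    thus ?thesis using nz[of \<one>] by simp
  qed
  have nuinv: "\<And>k. k \<in> H \<Longrightarrow> \<nu> (inv k) * \<nu> k = 1"
  proof -
    fix k assume k: "k \<in> H"
    have ik: "inv k \<in> H" using k by (rule m_inv_closed)
    have "inv k \<otimes> k = \<one>" using k Hsub by auto
    thus "\<nu> (inv k) * \<nu> k = 1" using nmul[OF ik k] nu1 by simp
  qed
  define IS where "IS = ind_space (mult G) (carrier G) H \<nu>"
  define f0 where "f0 = (\<lambda>g. if g \<in> H then \<nu> g else 0)"
  have f0_in: "f0 \<in> IS"
    unfolding IS_def ind_space_def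
  proof (intro CollectI conjI allI impI ballI)
    fix g assume "g \<notin> carrier G" thus "f0 g = 0" using Hsub f0_def by auto
  next
    fix h g assume h: "h \<in> H" and g: "g \<in> carrier G"
    show "f0 (h \<otimes> g) = \<nu> h * f0 g"
    proof (cases "g \<in> H")
      case True thus ?thesis using h nmul by (simp add: f0_def)
    next
      case False
      have "h \<otimes> g \<notin> H"
      proof
        assume "h \<otimes> g \<in> H"
        hence "inv h \<otimes> (h \<otimes> g) \<in> H" using h by auto
        moreover have "inv h \<otimes> (h \<otimes> g) = g" using h g Hsub
          by (simp add: m_assoc[symmetric] subsetD)
        ultimately show False using False by simp
      qed
      thus ?thesis using False by (simp add: f0_def)
    qed
  qed
  have f0_1: "f0 \<one> = 1" using nu1 by (simp add: f0_def)
  have IS_nz: "IS \<noteq> {\<lambda>_. 0}"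
  proof
    assume "IS = {\<lambda>_. 0}"
    hence "f0 = (\<lambda>_. 0)" using f0_in by auto
    hence "f0 \<one> = 0" by simp
    thus False using f0_1 by simp
  qed
  show ?thesis
    unfolding induced_irreducible_def IS_def[symmetric]
  proof (intro conjI IS_nz allI impI)
    fix W assume WW: "W \<subseteq> IS \<and> invariant_subspace (mult G) (carrier G) W"
    hence WIS: "W \<subseteq> IS" and inv: "invariant_subspace (mult G) (carrier G) W" by auto
    have W0: "(\<lambda>_. 0) \<in> W" and Wsc: "\<And>c f. f \<in> W \<Longrightarrow> (\<lambda>g. c * f g) \<in> W"
      and Wtr: "\<And>x f. x \<in> carrier G \<Longrightarrow> f \<in> W \<Longrightarrow> right_transl (mult G) (carrier G) x f \<in> W"
      using inv unfolding invariant_subspace_def by auto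
    have indE: "\<And>f h g. f \<in> IS \<Longrightarrow> h \<in> H \<Longrightarrow> g \<in> carrier G \<Longrightarrow> f (h \<otimes> g) = \<nu> h * f g"
      unfolding IS_def ind_space_def by auto
    have indZ: "\<And>f g. f \<in> IS \<Longrightarrow> g \<notin> carrier G \<Longrightarrow> f g = 0"
      unfolding IS_def ind_space_def by auto
    show "W = {\<lambda>_. 0} \<or> W = IS"
    proof (cases "W = {\<lambda>_. 0}")
      case True thus ?thesis by simp
    next
      case False
      then obtain f where fW: "f \<in> W" and fnz: "f \<noteq> (\<lambda>_. 0)" using W0 by blast
      then obtain g0 where g0: "f g0 \<noteq> 0" by auto
      have fIS: "f \<in> IS" using fW WIS by auto
      have g0G: "g0 \<in> carrier G" using indZ[OF fIS] g0 by auto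
      define f1 where "f1 = right_transl (mult G) (carrier G) g0 f"
      have f1W: "f1 \<in> W" using Wtr[OF g0G fW] f1_def by simp
      have f1IS: "f1 \<in> IS" using f1W WIS by auto
      have f1_1: "f1 \<one> \<noteq> 0" using g0 g0G by (simp add: f1_def right_transl_def)
      define F where "F = (\<lambda>g. \<Sum>k\<in>H. inverse (\<nu> k) * right_transl (mult G) (carrier G) k f1 g)"
      have FW: "F \<in> W" unfolding F_def
        by (rule W_sum_closed[OF inv finH]) (use Wsc Wtr f1W Hsub in blast)
      have FIS: "F \<in> IS" using FW WIS by auto
      have Fright: "F (g \<otimes> x) = \<nu> x * F g" if g: "g \<in> carrier G" and x: "x \<in> H" for g x
      proof -
        have xG: "x \<in> carrier G" using x Hsub by auto
        have "F (g \<otimes> x) = (\<Sum>k\<in>H. inverse (\<nu> k) * f1 (g \<otimes> x \<otimes> k))"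
          unfolding F_def right_transl_def using g xG by simp
        also have "\<dots> = (\<Sum>k\<in>H. inverse (\<nu> (inv x \<otimes> k)) * f1 (g \<otimes> x \<otimes> (inv x \<otimes> k)))"
        proof (rule sum.reindex_bij_witness[of _ "\<lambda>k. inv x \<otimes> k" "\<lambda>k. x \<otimes> k"])
          fix k assume k: "k \<in> H"
          have kG: "k \<in> carrier G" using k Hsub by auto
          show "inv x \<otimes> (x \<otimes> k) = k" using kG xG by (simp add: m_assoc[symmetric])
          show "x \<otimes> (inv x \<otimes> k) = k" using kG xG by (simp add: m_assoc[symmetric])
          show "x \<otimes> k \<in> H" using k x by simp
          show "inv x \<otimes> k \<in> H" using k x by simp
          show "inverse (\<nu> (inv x \<otimes> (x \<otimes> k))) * f1 (g \<otimes> x \<otimes> (inv x \<otimes> (x \<otimes> k))) =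
             inverse (\<nu> k) * f1 (g \<otimes> x \<otimes> k)" using kG xG by (simp add: m_assoc[symmetric])
        qed
        also have "\<dots> = (\<Sum>k\<in>H. \<nu> x * (inverse (\<nu> k) * f1 (g \<otimes> k)))"
        proof (rule sum.cong[OF refl])
          fix k assume k: "k \<in> H"
          have kG: "k \<in> carrier G" using k Hsub by auto
          have "g \<otimes> x \<otimes> (inv x \<otimes> k) = g \<otimes> k" using g xG kG
            by (simp add: m_assoc[symmetric]) (simp add: m_assoc)
          moreover have "\<nu> (inv x \<otimes> k) = \<nu> (inv x) * \<nu> k" using nmul x k by auto
          moreover have "inverse (\<nu> (inv x)) = \<nu> x" using nuinv[OF x] nz x
            by (intro inverse_unique) simp
          ultimately show "inverse (\<nu> (inv x \<otimes> k)) * f1 (g \<otimes> x \<otimes> (inv x \<otimes> k)) = \<nu> x * (inverse (\<nu> k) * f1 (g \<otimes> k))"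
            by (simp add: mult_ac)
        qed
        also have "\<dots> = \<nu> x * F g"
          unfolding F_def right_transl_def using g by (simp add: sum_distrib_left)
        finally show ?thesis .
      qed
      have F1: "F \<one> = of_nat (card H) * f1 \<one>"
      proof -
        have "F \<one> = (\<Sum>k\<in>H. inverse (\<nu> k) * f1 k)"
          unfolding F_def right_transl_def using Hsub by (intro sum.cong) auto
        also have "\<dots> = (\<Sum>k\<in>H. f1 \<one>)"
        proof (rule sum.cong[OF refl])
          fix k assume k: "k \<in> H"
          have "f1 k = f1 (k \<otimes> \<one>)" using k Hsub by auto
          also have "\<dots> = \<nu> k * f1 \<one>" using indE[OF f1IS k] by simp
          finally show "inverse (\<nu> k) * f1 k = f1 \<one>" using nz[OF k] by simp
        qed
        finally show ?thesis by simp
      qed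
      have cardH: "card H > 0" using finH one_closed card_gt_0_iff by blast
      have F1nz: "F \<one> \<noteq> 0" using F1 f1_1 cardH by simp
      have Fform: "F = (\<lambda>g. F \<one> * f0 g)"
      proof
        fix g
        show "F g = F \<one> * f0 g"
        proof (cases "g \<in> carrier G")
          case False thus ?thesis using indZ[OF FIS] Hsub by (auto simp: f0_def)
        next
          case gG: True
          show ?thesis
          proof (cases "g \<in> H")
            case True
            have "F g = F (g \<otimes> \<one>)" using gG by simp
            also have "\<dots> = \<nu> g * F \<one>" using indE[OF FIS True] by simp
            finally show ?thesis using True by (simp add: f0_def)
          next
            case False
            obtain x y where xy: "x \<in> H" "y \<in> H" "g \<otimes> x = y \<otimes> g" "\<nu> x \<noteq> \<nu> y"
              using key[OF gG False] by blast
            have "\<nu> x * F g = \<nu> y * F g"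
              using Fright[OF gG xy(1)] indE[OF FIS xy(2) gG] xy(3) by (simp, metis)
            hence "F g = 0" using xy(4) by simp
            thus ?thesis using False by (simp add: f0_def)
          qed
        qed
      qed
      have f0W: "f0 \<in> W"
      proof -
        have "(\<lambda>g. inverse (F \<one>) * F g) \<in> W" using Wsc[OF FW] .
        moreover have "(\<lambda>g. inverse (F \<one>) * F g) = f0"
          using F1nz by (subst Fform) (simp add: field_simps)
        ultimately show ?thesis by simp
      qed
      have "IS \<subseteq> W"
      proof
        fix f assume fIS: "f \<in> IS"
        define c where "c = inverse (of_nat (card H) :: 'k)"
        define S where "S = (\<lambda>u. \<Sum>g\<in>carrier G. c * f (inv g) * right_transl (mult G) (carrier G) g f0 u)"
        have SW: "S \<in> W" unfolding S_def
        proof (rule W_sum_closed[OF inv fin])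
          fix g assume "g \<in> carrier G"
          hence "right_transl (mult G) (carrier G) g f0 \<in> W" using Wtr f0W by blast
          from Wsc[OF this, of "c * f (inv g)"]
          show "(\<lambda>u. c * f (inv g) * right_transl (mult G) (carrier G) g f0 u) \<in> W"
            by (simp add: mult.assoc)
        qed
        have "S = f"
        proof
          fix u show "S u = f u"
          proof (cases "u \<in> carrier G")
            case False thus ?thesis using indZ[OF fIS] by (simp add: S_def right_transl_def)
          next
            case uG: True
            have "S u = (\<Sum>g\<in>carrier G. c * f (inv g) * f0 (u \<otimes> g))"
              using uG by (simp add: S_def right_transl_def)
            also have "\<dots> = (\<Sum>k\<in>carrier G. c * f (inv (inv u \<otimes> k)) * f0 (u \<otimes> (inv u \<otimes> k)))"
            proof (rule sum.reindex_bij_witness[of _ "\<lambda>k. inv u \<otimes> k" "\<lambda>g. u \<otimes> g"])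
              fix k assume kG: "k \<in> carrier G"
              show "inv u \<otimes> (u \<otimes> k) = k" using kG uG by (simp add: m_assoc[symmetric])
              show "u \<otimes> (inv u \<otimes> k) = k" using kG uG by (simp add: m_assoc[symmetric])
              show "u \<otimes> k \<in> carrier G" using kG uG by simp
              show "inv u \<otimes> k \<in> carrier G" using kG uG by simp
              show "c * f (inv (inv u \<otimes> (u \<otimes> k))) * f0 (u \<otimes> (inv u \<otimes> (u \<otimes> k))) =
                 c * f (inv k) * f0 (u \<otimes> k)" using kG uG by (simp add: m_assoc[symmetric])
            qed
            also have "\<dots> = (\<Sum>k\<in>carrier G. if k \<in> H then c * f u else 0)"
            proof (rule sum.cong[OF refl])
              fix k assume kG: "k \<in> carrier G"
              have e1: "u \<otimes> (inv u \<otimes> k) = k" using uG kG by (simp add: m_assoc[symmetric])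
              have e2: "inv (inv u \<otimes> k) = inv k \<otimes> u" using uG kG by (simp add: inv_mult_group)
              show "c * f (inv (inv u \<otimes> k)) * f0 (u \<otimes> (inv u \<otimes> k)) = (if k \<in> H then c * f u else 0)"
              proof (cases "k \<in> H")
                case True
                have "f (inv k \<otimes> u) = \<nu> (inv k) * f u" using indE[OF fIS _ uG] True by auto
                thus ?thesis using True e1 e2 nuinv[OF True] by (simp add: f0_def mult_ac)
              qed (simp add: e1 f0_def)
            qed
            also have "\<dots> = (\<Sum>k\<in>H. c * f u)"
              using Hsub fin by (simp add: sum.If_cases Int_absorb1)
            also have "\<dots> = f u" using cardH by (simp add: c_def)
            finally show ?thesis .
          qed
        qed
        thus "f \<in> W" using SW by simp
      qed
      thus ?thesis using WIS by auto
    qed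
  qed
qed



lemma sum_exchange_tri:
  fixes F :: "nat \<Rightarrow> nat \<Rightarrow> 'b::comm_monoid_add"
  shows "(\<Sum>i\<le>k. \<Sum>j\<le>i. F i j) = (\<Sum>j\<le>k. \<Sum>l\<le>k-j. F (j+l) j)"
proof -
  have "(\<Sum>i\<le>k. \<Sum>j\<le>i. F i j) = (\<Sum>i\<le>k. \<Sum>j\<le>i. (\<lambda>j l. F (j+l) j) j (i-j))"
    by (intro sum.cong) auto
  also have "\<dots> = (\<Sum>(j,l)\<in>{(j,l). j+l \<le> k}. F (j+l) j)"
    by (rule sum.triangle_reindex_eq[symmetric])
  also have "{(j,l). j+l \<le> k} = Sigma {..k} (\<lambda>j. {..k-j})" by auto
  also have "(\<Sum>(j,l)\<in>Sigma {..k} (\<lambda>j. {..k-j}). F (j+l) j) = (\<Sum>j\<le>k. \<Sum>l\<le>k-j. F (j+l) j)"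
    by (rule sum.Sigma[symmetric]) auto
  finally show ?thesis .
qed

locale UQ =
  fixes q h :: nat and ty :: "'a::{field,finite} itself"
  assumes frob_add: "\<And>x y :: 'a. (x + y) ^ q = x ^ q + y ^ q"
    and frob2: "\<And>x :: 'a. x ^ (q^2) = x"
    and qpos: "q > 0" and h2: "h \<ge> 2"
begin

abbreviation mul :: "(nat \<Rightarrow> 'a) \<Rightarrow> (nat \<Rightarrow> 'a) \<Rightarrow> (nat \<Rightarrow> 'a)" where "mul \<equiv> U_mult q h"
abbreviation eone :: "nat \<Rightarrow> 'a" where "eone \<equiv> (\<lambda>i. if i = 0 then 1 else 0)"

lemma frobk_add: "((x::'a) + y) ^ (q^k) = x ^ (q^k) + y ^ (q^k)"
proof (induction k arbitrary: x y)
  case (Suc k)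
  have "(x + y) ^ (q ^ Suc k) = ((x+y)^q)^(q^k)" by (simp add: power_mult)
  also have "\<dots> = (x^q)^(q^k) + (y^q)^(q^k)" by (simp add: frob_add Suc.IH)
  finally show ?case by (simp add: power_mult)
qed simp

lemma frobk_zero: "(0::'a) ^ (q^k) = 0"
  using qpos by simp

lemma frobk_sum: "(\<Sum>i\<in>A. f i :: 'a) ^ (q^k) = (\<Sum>i\<in>A. (f i) ^ (q^k))"
  by (induction A rule: infinite_finite_induct) (simp_all add: frobk_zero frobk_add)

lemma frobk_comp: "((x::'a) ^ (q^a)) ^ (q^b) = x ^ (q^(a+b))"
  by (simp add: power_mult[symmetric] power_add mult.commute)

lemma frobk_diff: "((x::'a) - y) ^ (q^k) = x ^ (q^k) - y ^ (q^k)"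
proof -
  have "x ^ (q^k) = ((x - y) + y) ^ (q^k)" by simp
  also have "\<dots> = (x-y)^(q^k) + y^(q^k)" by (rule frobk_add)
  finally show ?thesis by simp
qed

lemma frob_diff: "((x::'a) - y) ^ q = x ^ q - y ^ q"
  using frobk_diff[of x y 1] by simp

lemma mul_assoc: "mul (mul a b) c = mul a (mul b c)"
proof
  fix k
  show "mul (mul a b) c k = mul a (mul b c) k"
  proof (cases "k \<le> 2*(h-1)")
    case False thus ?thesis by (simp add: U_mult_def)
  next
    case True
    have "mul (mul a b) c k = (\<Sum>i\<le>k. \<Sum>j\<le>i. a j * b (i-j) ^ (q^j) * c (k-i) ^ (q^i))"
      using True unfolding U_mult_def by (auto simp: sum_distrib_right intro!: sum.cong)
    also have "\<dots> = (\<Sum>j\<le>k. \<Sum>l\<le>k-j. a j * b ((j+l)-j) ^ (q^j) * c (k-(j+l)) ^ (q^(j+l)))"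
      by (rule sum_exchange_tri)
    also have "\<dots> = mul a (mul b c) k"
      using True unfolding U_mult_def
      by (auto simp: sum_distrib_left frobk_sum power_mult_distrib frobk_comp add.commute mult.assoc intro!: sum.cong)
    finally show ?thesis .
  qed
qed


lemma U_mem: "a \<in> U_carrier h \<longleftrightarrow> a 0 = 1 \<and> (\<forall>i. i > 2*(h-1) \<longrightarrow> a i = (0::'a))"
  by (simp add: U_carrier_def)

lemma mul_zero_beyond: "k > 2*(h-1) \<Longrightarrow> mul a b k = 0"
  by (simp add: U_mult_def)

lemma mul_0: "mul a b 0 = a 0 * b 0"
  by (simp add: U_mult_def)

lemma mul_closed: "a \<in> U_carrier h \<Longrightarrow> b \<in> U_carrier h \<Longrightarrow> mul a b \<in> U_carrier h"
  unfolding U_carrier_def U_mult_def by simp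

lemma eone_U: "eone \<in> U_carrier h"
  by (simp add: U_mem)

lemma mul_eone_left: "a \<in> U_carrier h \<Longrightarrow> mul eone a = a"
proof
  fix k assume a: "a \<in> U_carrier h"
  show "mul eone a k = a k"
  proof (cases "k \<le> 2*(h-1)")
    case False thus ?thesis using a by (simp add: U_mem mul_zero_beyond)
  next
    case True
    have e: "\<And>i. (if i = 0 then 1 else 0) * a (k-i) ^ (q^i) = (if i = 0 then a k else 0)" by simp
    have "mul eone a k = (\<Sum>i\<le>k. if i = 0 then a k else 0)"
      using True unfolding U_mult_def by (simp only: if_True e)
    also have "\<dots> = a k" by simp
    finally show ?thesis .
  qed
qed

lemma mul_eone_right: "(\<forall>i. i > 2*(h-1) \<longrightarrow> a i = 0) \<Longrightarrow> mul a eone = a"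
proof
  fix k assume a: "\<forall>i. i > 2*(h-1) \<longrightarrow> a i = 0"
  show "mul a eone k = a k"
  proof (cases "k \<le> 2*(h-1)")
    case False thus ?thesis using a by (simp add: mul_zero_beyond)
  next
    case True
    have "mul a eone k = (\<Sum>i\<le>k. a i * (if k - i = 0 then 1 else 0) ^ (q^i))"
      using True unfolding U_mult_def by (simp del: diff_is_0_eq diff_is_0_eq')
    also have "\<dots> = (\<Sum>i\<le>k. if i = k then a k else 0)"
      by (rule sum.cong) (auto simp: frobk_zero)
    also have "\<dots> = a k" by simp
    finally show ?thesis .
  qed
qed

lemma mul_split_top:
  assumes "k \<le> 2*(h-1)" "a 0 = 1"
  shows "mul b a k = b k + (\<Sum>i<k. b i * a (k-i) ^ (q^i))"
proof -
  have "{..k} = insert k {..<k}" by auto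
  thus ?thesis using assms unfolding U_mult_def by simp
qed

lemma mul_right_cancel:
  assumes a: "a \<in> U_carrier h" and b: "b \<in> U_carrier h" and b': "b' \<in> U_carrier h"
    and eq: "mul b a = mul b' a"
  shows "b = b'"
proof -
  have "b k = b' k" for k
  proof (induction k rule: less_induct)
    case (less k)
    show ?case
    proof (cases "k \<le> 2*(h-1)")
      case False thus ?thesis using b b' by (simp add: U_mem)
    next
      case True
      have a0: "a 0 = 1" using a by (simp add: U_mem)
      have "(\<Sum>i<k. b i * a (k-i) ^ (q^i)) = (\<Sum>i<k. b' i * a (k-i) ^ (q^i))"
        using less by (intro sum.cong) auto
      moreover have "mul b a k = mul b' a k" using eq by simp
      ultimately show ?thesis using mul_split_top[of k a b, OF True a0] mul_split_top[of k a b', OF True a0] by simp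
    qed
  qed
  thus ?thesis by auto
qed

lemma finite_U: "finite (U_carrier h :: (nat \<Rightarrow> 'a) set)"
proof -
  let ?R = "(\<lambda>f i. if i \<le> 2*(h-1) then f i else 0) ` (PiE {..2*(h-1)} (\<lambda>_. UNIV :: 'a set))"
  have "U_carrier h \<subseteq> ?R"
  proof
    fix a :: "nat \<Rightarrow> 'a" assume a: "a \<in> U_carrier h"
    have "a = (\<lambda>i. if i \<le> 2*(h-1) then restrict a {..2*(h-1)} i else 0)"
      using a by (auto simp: U_mem)
    moreover have "restrict a {..2*(h-1)} \<in> PiE {..2*(h-1)} (\<lambda>_. UNIV)" by simp
    ultimately show "a \<in> ?R" by blast
  qed
  moreover have "finite ?R" by (intro finite_imageI finite_PiE) auto
  ultimately show ?thesis by (rule finite_subset)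
qed

definition GU :: "(nat \<Rightarrow> 'a) monoid" where
  "GU = \<lparr>carrier = U_carrier h, mult = mul, one = eone\<rparr>"

lemma GU_simps [simp]: "carrier GU = U_carrier h" "mult GU = mul" "one GU = eone"
  by (simp_all add: GU_def)

lemma monoid_GU: "monoid GU"
proof (rule monoidI)
  fix x y assume "x \<in> carrier GU" "y \<in> carrier GU"
  thus "x \<otimes>\<^bsub>GU\<^esub> y \<in> carrier GU" by (simp add: mul_closed)
next
  show "\<one>\<^bsub>GU\<^esub> \<in> carrier GU" by (simp add: eone_U)
next
  fix x y z show "x \<otimes>\<^bsub>GU\<^esub> y \<otimes>\<^bsub>GU\<^esub> z = x \<otimes>\<^bsub>GU\<^esub> (y \<otimes>\<^bsub>GU\<^esub> z)"
    by (simp add: mul_assoc)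
next
  fix x assume "x \<in> carrier GU"
  thus "\<one>\<^bsub>GU\<^esub> \<otimes>\<^bsub>GU\<^esub> x = x" by (simp add: mul_eone_left)
next
  fix x assume "x \<in> carrier GU"
  hence "\<forall>i. i > 2*(h-1) \<longrightarrow> x i = 0" by (simp add: U_carrier_def)
  thus "x \<otimes>\<^bsub>GU\<^esub> \<one>\<^bsub>GU\<^esub> = x" by (simp add: mul_eone_right)
qed

lemma group_GU: "group GU"
proof (rule monoid.group_l_invI[OF monoid_GU])
  fix a assume a: "a \<in> carrier GU"
  hence aU: "a \<in> U_carrier h" by simp
  have inj: "inj_on (\<lambda>b. mul b a) (U_carrier h)"
    by (rule inj_onI) (use mul_right_cancel aU in blast)
  have "(\<lambda>b. mul b a) ` U_carrier h = U_carrier h"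
    by (rule card_subset_eq[OF finite_U]) (use mul_closed aU inj card_image in auto)
  hence "eone \<in> (\<lambda>b. mul b a) ` U_carrier h" using eone_U by simp
  then obtain b where "b \<in> U_carrier h" "mul b a = eone" by auto
  thus "\<exists>y\<in>carrier GU. y \<otimes>\<^bsub>GU\<^esub> a = \<one>\<^bsub>GU\<^esub>" by auto
qed


lemma odd_vanish_mul:
  assumes a: "\<forall>i. odd i \<and> i < J \<longrightarrow> a i = 0" and b: "\<forall>i. odd i \<and> i < J \<longrightarrow> b i = (0::'a)"
  shows "\<forall>k. odd k \<and> k < J \<longrightarrow> mul a b k = 0"
proof (intro allI impI)
  fix k assume k: "odd k \<and> k < J"
  have "(\<Sum>i\<le>k. a i * b (k-i) ^ (q^i)) = 0"
  proof (rule sum.neutral, intro ballI)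
    fix i assume i: "i \<in> {..k}"
    show "a i * b (k-i) ^ (q^i) = 0"
    proof (cases "odd i")
      case True thus ?thesis using a k i by auto
    next
      case False
      hence "odd (k-i)" using k i by auto
      hence "b (k-i) = 0" using b k i by auto
      thus ?thesis by (simp add: frobk_zero)
    qed
  qed
  thus "mul a b k = 0" by (simp add: U_mult_def)
qed

lemma mid_coeff:
  assumes k: "odd k" "k \<le> 2*(h-1)" and a0: "a 0 = 1" and b0: "b 0 = 1"
    and a: "\<forall>i. odd i \<and> i < k \<longrightarrow> a i = 0" and b: "\<forall>i. odd i \<and> i < k \<longrightarrow> b i = (0::'a)"
  shows "mul a b k = a k + b k"
proof -
  have k0: "k \<noteq> 0" using odd_pos[OF k(1)] by simp
  have "mul a b k = (\<Sum>i\<le>k. a i * b (k-i) ^ (q^i))" using k by (simp add: U_mult_def)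
  also have "\<dots> = (\<Sum>i\<le>k. (if i = 0 then b k else 0) + (if i = k then a k else 0))"
  proof (rule sum.cong[OF refl])
    fix i assume i: "i \<in> {..k}"
    show "a i * b (k-i) ^ (q^i) = (if i = 0 then b k else 0) + (if i = k then a k else 0)"
    proof (cases "i = 0")
      case True thus ?thesis using a0 k0 by simp
    next
      case i0: False
      show ?thesis
      proof (cases "i = k")
        case True thus ?thesis using b0 k0 by simp
      next
        case False
        hence ik: "i < k" using i by auto
        show ?thesis
        proof (cases "odd i")
          case True thus ?thesis using a ik i0 False by auto
        next
          case ev: False
          hence "odd (k-i)" using k ik by auto
          moreover have "k - i < k" using i0 ik by auto
          ultimately have "b (k-i) = 0" using b by auto
          thus ?thesis using i0 False by (simp add: frobk_zero)
        qed
      qed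
    qed
  qed
  also have "\<dots> = b k + a k" by (simp add: sum.distrib)
  finally show ?thesis by simp
qed

lemma H'_sub: "H' q h \<subseteq> U_carrier h"
  by (auto simp: H'_def)

lemma H0'_sub_H': "H0' h \<subseteq> (H' q h :: (nat \<Rightarrow> 'a) set)"
proof
  fix a :: "nat \<Rightarrow> 'a" assume a: "a \<in> H0' h"
  have aU: "a \<in> U_carrier h" and c: "\<And>i. a i \<noteq> 0 \<Longrightarrow> i \<ge> 1 \<Longrightarrow> i = 2*(h-1) \<or> (odd i \<and> i > h-1)"
    using a by (auto simp: H0'_def)
  have z: "a i = 0" if "odd i" "i \<le> h-1" for i
  proof (rule ccontr)
    assume "a i \<noteq> 0"
    moreover have "i \<ge> 1" using that by (cases i) auto
    ultimately have "i = 2*(h-1) \<or> (odd i \<and> i > h-1)" using c by blast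
    thus False using that h2 by auto
  qed
  have "a (h-1) = 0" if "even h"
  proof -
    have "odd (h-1)" using that h2 by auto
    thus ?thesis using z by auto
  qed
  thus "a \<in> H' q h" using aU z qpos by (auto simp: H'_def)
qed

lemma eone_H': "eone \<in> H' q h"
  using eone_U qpos by (auto simp: H'_def)

lemma H'_closed:
  assumes a: "a \<in> H' q h" and b: "b \<in> H' q h"
  shows "mul a b \<in> H' q h"
proof (cases "odd h")
  case True
  have "\<forall>i. odd i \<and> i < h \<longrightarrow> a i = 0" "\<forall>i. odd i \<and> i < h \<longrightarrow> b i = 0"
    using a b True by (auto simp: H'_def)
  hence "\<forall>k. odd k \<and> k < h \<longrightarrow> mul a b k = 0" by (rule odd_vanish_mul)
  hence "\<forall>k. odd k \<and> k \<le> h-1 \<longrightarrow> mul a b k = 0" using h2 by auto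
  thus ?thesis using True a b mul_closed H'_sub by (auto simp: H'_def)
next
  case False
  have av: "\<forall>i. odd i \<and> i < h-1 \<longrightarrow> a i = 0" and bv: "\<forall>i. odd i \<and> i < h-1 \<longrightarrow> b i = 0"
    and aq: "a (h-1) ^ q = a (h-1)" and bq: "b (h-1) ^ q = b (h-1)"
    using a b False by (auto simp: H'_def)
  have v: "\<forall>k. odd k \<and> k < h-1 \<longrightarrow> mul a b k = 0" by (rule odd_vanish_mul[OF av bv])
  have "mul a b (h-1) = a (h-1) + b (h-1)"
    using False h2 a b av bv by (intro mid_coeff) (auto simp: H'_def U_carrier_def)
  hence "mul a b (h-1) ^ q = mul a b (h-1)" using aq bq frob_add by simp
  thus ?thesis using False v a b mul_closed H'_sub by (auto simp: H'_def)
qed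

lemma subgroup_H': "subgroup (H' q h) GU"
  by (rule group.finite_closed_subgroup[OF group_GU])
     (use finite_U H'_sub eone_H' H'_closed finite_subset in auto)

definition Gev :: "nat \<Rightarrow> (nat \<Rightarrow> 'a) set" where
  "Gev j = {u \<in> U_carrier h. \<forall>i. odd i \<and> i < j \<longrightarrow> u i = 0}"

lemma subgroup_Gev: "subgroup (Gev j) GU"
proof (rule group.finite_closed_subgroup[OF group_GU])
  show "finite (Gev j)" using finite_U by (rule finite_subset[rotated]) (auto simp: Gev_def)
  show "Gev j \<subseteq> carrier GU" by (auto simp: Gev_def)
  have "eone \<in> Gev j" using eone_U by (simp add: Gev_def)
  thus "Gev j \<noteq> {}" by blast
  fix a b assume "a \<in> Gev j" "b \<in> Gev j"
  thus "a \<otimes>\<^bsub>GU\<^esub> b \<in> Gev j"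
    using odd_vanish_mul[of j a b] mul_closed by (auto simp: Gev_def)
qed


lemma pow_q2k: "(z::'a) ^ ((q^2)^t) = z"
proof (induction t)
  case (Suc t)
  have "z ^ ((q^2)^Suc t) = (z ^ (q^2)) ^ ((q^2)^t)" by (simp add: power_mult)
  thus ?case using Suc frob2 by simp
qed simp

lemma pow_q_odd: assumes "odd e" shows "(z::'a) ^ (q^e) = z ^ q"
proof -
  obtain t where t: "e = Suc (2*t)" using assms oddE by fastforce
  have "q ^ e = q * (q^2)^t" using t by (simp add: power_mult)
  hence "z ^ (q^e) = (z^q) ^ ((q^2)^t)" by (simp add: power_mult)
  thus ?thesis using pow_q2k by simp
qed

definition Vm :: "nat \<Rightarrow> (nat \<Rightarrow> 'a) \<Rightarrow> bool" where
  "Vm m v \<longleftrightarrow> (\<forall>k. v k \<noteq> 0 \<longrightarrow> k = 2*(h-1) \<or> (odd k \<and> m < k \<and> k < 2*(h-1)))"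

lemma V_mul:
  assumes mj: "m + j = 2*(h-1)" and v: "Vm m v" and u: "u \<in> Gev j"
  shows "Vm m (mul v u)" "mul v u (2*(h-1)) = v (2*(h-1))"
proof -
  let ?N = "2*(h-1)"
  have uU: "u \<in> U_carrier h" and u0: "u 0 = 1" and uv: "\<And>i. odd i \<Longrightarrow> i < j \<Longrightarrow> u i = 0"
    using u by (auto simp: Gev_def U_carrier_def)
  have vk: "\<And>k. v k \<noteq> 0 \<Longrightarrow> k = ?N \<or> (odd k \<and> m < k \<and> k < ?N)" using v by (auto simp: Vm_def)
  have "mul v u ?N = (\<Sum>i\<le>?N. v i * u (?N - i) ^ (q^i))" by (simp add: U_mult_def)
  also have "\<dots> = (\<Sum>i\<le>?N. if i = ?N then v ?N else 0)"
  proof (rule sum.cong[OF refl])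
    fix i assume i: "i \<in> {..?N}"
    show "v i * u (?N - i) ^ (q^i) = (if i = ?N then v ?N else 0)"
    proof (cases "i = ?N")
      case True thus ?thesis using u0 by simp
    next
      case False
      show ?thesis
      proof (cases "v i = 0")
        case False
        hence "odd i \<and> m < i" using vk[of i] i \<open>i \<noteq> ?N\<close> by auto
        hence "odd (?N - i)" "?N - i < j" using i \<open>i \<noteq> ?N\<close> mj by auto
        hence "u (?N - i) = 0" using uv by auto
        thus ?thesis using \<open>i \<noteq> ?N\<close> by (simp add: frobk_zero)
      qed (use \<open>i \<noteq> ?N\<close> in simp)
    qed
  qed
  also have "\<dots> = v ?N" by simp
  finally show "mul v u ?N = v ?N" .
  show "Vm m (mul v u)"
    unfolding Vm_def
  proof (intro allI impI)
    fix k assume nz: "mul v u k \<noteq> 0"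
    hence kN: "k \<le> ?N" using mul_zero_beyond[of k v u] by (cases "k \<le> ?N") auto
    show "k = ?N \<or> (odd k \<and> m < k \<and> k < ?N)"
    proof (cases "k = ?N")
      case False
      hence kN': "k < ?N" using kN by simp
      have "(\<Sum>i\<le>k. v i * u (k - i) ^ (q^i)) \<noteq> 0" using nz kN by (simp add: U_mult_def)
      then obtain i where i: "i \<le> k" "v i * u (k - i) ^ (q^i) \<noteq> 0"
        by (metis (no_types, lifting) atMost_iff sum.neutral)
      hence vi: "v i \<noteq> 0" and ui: "u (k-i) \<noteq> 0" using frobk_zero by auto
      hence io: "odd i" "m < i" using vk[of i] i kN' by auto
      have "odd k"
      proof (rule ccontr)
        assume "\<not> odd k"
        hence "odd (k - i)" using io i by auto
        moreover have "k - i < j" using io i kN' mj by auto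
        ultimately show False using uv ui by auto
      qed
      thus ?thesis using io i kN' by auto
    qed simp
  qed
qed

lemma mul_add_left: "mul (\<lambda>k. u k + v k) c = (\<lambda>k. mul u c k + mul v c k)"
  by (auto simp: U_mult_def sum.distrib distrib_right)

lemma gx_coeff:
  assumes g0: "g 0 = 1" and m0: "0 < m" and kN: "k \<le> 2*(h-1)"
    and xdef: "x = (\<lambda>k. if k = 0 then 1 else if k = m then a else 0)"
  shows "mul g x k = g k + (if m \<le> k then g (k-m) * a ^ (q^(k-m)) else 0)"
proof -
  have "mul g x k = (\<Sum>i\<le>k. g i * x (k-i) ^ (q^i))" using kN by (simp add: U_mult_def)
  also have "\<dots> = (\<Sum>i\<le>k. (if i = k then g k else 0) +
        (if m \<le> k then (if i = k - m then g (k-m) * a ^ (q^(k-m)) else 0) else 0))"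
  proof (rule sum.cong[OF refl])
    fix i assume i: "i \<in> {..k}"
    show "g i * x (k-i) ^ (q^i) = (if i = k then g k else 0) +
        (if m \<le> k then (if i = k - m then g (k-m) * a ^ (q^(k-m)) else 0) else 0)"
      using i m0 qpos by (auto simp: xdef frobk_zero)
  qed
  also have "\<dots> = g k + (if m \<le> k then g (k-m) * a ^ (q^(k-m)) else 0)"
    by (simp add: sum.distrib)
  finally show ?thesis .
qed

lemma xg_coeff:
  assumes g0: "g 0 = 1" and m0: "0 < m" and kN: "k \<le> 2*(h-1)"
    and xdef: "x = (\<lambda>k. if k = 0 then 1 else if k = m then a else 0)"
  shows "mul x g k = g k + (if m \<le> k then a * g (k-m) ^ (q^m) else 0)"
proof -
  have "mul x g k = (\<Sum>i\<le>k. x i * g (k-i) ^ (q^i))" using kN by (simp add: U_mult_def)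
  also have "\<dots> = (\<Sum>i\<le>k. (if i = 0 then g k else 0) +
        (if m \<le> k then (if i = m then a * g (k-m) ^ (q^m) else 0) else 0))"
  proof (rule sum.cong[OF refl])
    fix i assume i: "i \<in> {..k}"
    show "x i * g (k-i) ^ (q^i) = (if i = 0 then g k else 0) +
        (if m \<le> k then (if i = m then a * g (k-m) ^ (q^m) else 0) else 0)"
      using i m0 by (auto simp: xdef)
  qed
  also have "\<dots> = g k + (if m \<le> k then a * g (k-m) ^ (q^m) else 0)"
    by (simp add: sum.distrib)
  finally show ?thesis .
qed

end

context UQ begin

lemma D_props:
  assumes gG: "g \<in> Gev j" and jo: "odd j" and mo: "odd m" and mj: "m + j = 2*(h-1)"
    and jm: "j \<le> m"
    and xdef: "x = (\<lambda>k. if k = 0 then 1 else if k = m then a else 0)"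
    and Ddef: "D = (\<lambda>k. mul g x k - mul x g k)"
  shows "Vm m D" "D (2*(h-1)) = g j * a ^ q - a * g j ^ q"
proof -
  let ?N = "2*(h-1)"
  have g0: "g 0 = 1" and gv: "\<And>i. odd i \<Longrightarrow> i < j \<Longrightarrow> g i = 0"
    using gG by (auto simp: Gev_def U_carrier_def)
  have m0: "0 < m" using mo odd_pos by blast
  have Dk: "D k = (if k \<le> ?N \<and> m \<le> k then g (k-m) * a ^ (q^(k-m)) - a * g (k-m) ^ (q^m) else 0)" for k
  proof (cases "k \<le> ?N")
    case True
    show ?thesis using gx_coeff[of g m k x a, OF g0 m0 True xdef] xg_coeff[of g m k x a, OF g0 m0 True xdef] True
      by (simp add: Ddef)
  next
    case False thus ?thesis by (simp add: Ddef mul_zero_beyond)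
  qed
  show "D ?N = g j * a ^ q - a * g j ^ q"
  proof -
    have e: "?N - m = j" using mj by simp
    show ?thesis using Dk[of ?N] mj pow_q_odd[OF jo] pow_q_odd[OF mo] by (simp only: e) simp
  qed
  show "Vm m D"
    unfolding Vm_def
  proof (intro allI impI)
    fix k assume nz: "D k \<noteq> 0"
    hence kN: "k \<le> ?N" and mk: "m \<le> k" and nz': "g (k-m) * a ^ (q^(k-m)) - a * g (k-m) ^ (q^m) \<noteq> 0"
      using Dk[of k] by (auto split: if_splits)
    define i where "i = k - m"
    have ki: "k = m + i" using i_def mk by simp
    have i0: "i \<noteq> 0"
    proof
      assume "i = 0"
      thus False using nz' g0 i_def by simp
    qed
    show "k = ?N \<or> (odd k \<and> m < k \<and> k < ?N)"
    proof (cases "odd i")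
      case True
      have "\<not> i < j"
      proof
        assume "i < j"
        hence "g i = 0" using gv True by simp
        thus False using nz' i_def qpos by (simp add: frobk_zero)
      qed
      hence "k = ?N" using ki mj kN by simp
      thus ?thesis by simp
    next
      case False
      hence "odd k" using ki mo by simp
      moreover have "k \<noteq> ?N" using \<open>odd k\<close> by auto
      ultimately show ?thesis using ki i0 kN by auto
    qed
  qed
qed


lemma key_core:
  fixes \<nu> :: "(nat \<Rightarrow> 'a) \<Rightarrow> 'k::field" and \<psi> :: "'a \<Rightarrow> 'k"
  assumes gU: "g \<in> U_carrier h"
    and jo: "odd j" and jle: "j \<le> h-1" and gv: "\<forall>i. odd i \<and> i < j \<longrightarrow> g i = 0"
    and xdef: "x = (\<lambda>k. if k = 0 then 1 else if k = 2*(h-1) - j then a else 0)"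
    and xH: "x \<in> H' q h"
    and chi: "is_character_on mul (H' q h) \<nu>"
    and nu0: "\<forall>z\<in>H0' h. \<nu> z = \<psi> (z (2*(h-1)))"
    and psic: "\<psi> (g j * a ^ q - a * g j ^ q) \<noteq> 1"
  shows "\<exists>y\<in>H' q h. mul g x = mul y g \<and> \<nu> x \<noteq> \<nu> y"
proof -
  let ?N = "2*(h-1)"
  define m where "m = ?N - j"
  have mj: "m + j = ?N" using jle h2 m_def by simp
  have mo: "odd m" using jo mj by (metis even_add even_mult_iff even_numeral)
  have jm: "j \<le> m" and mh: "h - 1 \<le> m" using jle mj by auto
  have m0: "0 < m" using mo odd_pos by blast
  have xdef': "x = (\<lambda>k. if k = 0 then 1 else if k = m then a else 0)" unfolding xdef m_def by simp
  interpret G: group GU by (rule group_GU)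
  interpret Hs: subgroup "Gev j" GU by (rule subgroup_Gev)
  have gG: "g \<in> Gev j" using gU gv by (simp add: Gev_def)
  have xU: "x \<in> U_carrier h" using xH H'_sub by auto
  have xG: "x \<in> Gev j" using xU jm by (auto simp: Gev_def xdef')
  define gi where "gi = inv\<^bsub>GU\<^esub> g"
  define xi where "xi = inv\<^bsub>GU\<^esub> x"
  have giG: "gi \<in> Gev j" using gG gi_def by simp
  have xiG: "xi \<in> Gev j" using xG xi_def by simp
  have gig: "mul gi g = eone" using G.l_inv[of g] gU gi_def by simp
  have xix: "mul xi x = eone" using G.l_inv[of x] xU xi_def by simp
  define D where "D = (\<lambda>k. mul g x k - mul x g k)"
  have DV: "Vm m D" and DN: "D ?N = g j * a ^ q - a * g j ^ q"
    using D_props[OF gG jo mo mj jm xdef' D_def] by auto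
  define E where "E = mul (mul D gi) xi"
  have E1: "Vm m (mul D gi)" and E1N: "mul D gi ?N = D ?N" using V_mul[OF mj DV giG] by auto
  have EV: "Vm m E" and EN: "E ?N = D ?N" using V_mul[OF mj E1 xiG] E1N E_def by auto
  define w where "w = (\<lambda>k. eone k + E k)"
  have Ek: "\<And>k. E k \<noteq> 0 \<Longrightarrow> k = ?N \<or> (odd k \<and> m < k \<and> k < ?N)" using EV by (simp add: Vm_def)
  have E0: "E 0 = 0" using Ek[of 0] h2 by auto
  have Ebig: "\<And>k. k > ?N \<Longrightarrow> E k = 0" using Ek by fastforce
  have wU: "w \<in> U_carrier h" using E0 Ebig by (auto simp: w_def U_carrier_def)
  have wH0: "w \<in> H0' h"
    unfolding H0'_def
  proof (intro CollectI conjI wU allI impI)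
    fix i assume "w i \<noteq> 0 \<and> i \<ge> 1"
    hence "E i \<noteq> 0" by (auto simp: w_def)
    thus "i = ?N \<or> (odd i \<and> i > h - 1)" using Ek[of i] mh by auto
  qed
  have wH: "w \<in> H' q h" using wH0 H0'_sub_H' by auto
  have N0: "?N \<noteq> 0" using h2 by auto
  have nuw: "\<nu> w = \<psi> (g j * a ^ q - a * g j ^ q)"
    using nu0 wH0 N0 EN DN by (simp add: w_def)
  define y where "y = mul w x"
  have yH: "y \<in> H' q h" using H'_closed[OF wH xH] y_def by simp
  have nz: "\<And>z. z \<in> H' q h \<Longrightarrow> \<nu> z \<noteq> 0"
    and nmul: "\<And>z z'. z \<in> H' q h \<Longrightarrow> z' \<in> H' q h \<Longrightarrow> \<nu> (mul z z') = \<nu> z * \<nu> z'"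
    using chi unfolding is_character_on_def by auto
  have nuy: "\<nu> y = \<nu> w * \<nu> x" using nmul[OF wH xH] y_def by simp
  have ne: "\<nu> x \<noteq> \<nu> y"
  proof
    assume "\<nu> x = \<nu> y"
    hence "\<nu> x * 1 = \<nu> x * \<nu> w" using nuy by (simp add: mult.commute)
    hence "\<nu> w = 1" using nz[OF xH] by (metis mult_left_cancel)
    thus False using nuw psic by simp
  qed
  have DU: "\<forall>k. k > ?N \<longrightarrow> D k = 0" by (simp add: D_def mul_zero_beyond)
  have xgU: "mul x g \<in> U_carrier h" using mul_closed[OF xU gU] .
  have "mul y g = mul w (mul x g)" using y_def mul_assoc by simp
  also have "\<dots> = (\<lambda>k. mul eone (mul x g) k + mul E (mul x g) k)"
    unfolding w_def by (rule mul_add_left)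
  also have "mul eone (mul x g) = mul x g" using mul_eone_left[OF xgU] .
  also have "mul E (mul x g) = mul D (mul gi (mul xi (mul x g)))"
    by (simp add: E_def mul_assoc)
  also have "mul xi (mul x g) = g" using mul_assoc[of xi x g, symmetric] xix mul_eone_left[OF gU] by simp
  also have "mul D (mul gi g) = D" using gig mul_eone_right DU by simp
  finally have "mul y g = (\<lambda>k. mul x g k + D k)" .
  also have "\<dots> = mul g x" by (simp add: D_def)
  finally have yg: "mul y g = mul g x" .
  show ?thesis by (rule bexI[of _ y]) (use yg ne yH in auto)
qed


lemma frob_twice: "((z::'a) ^ q) ^ q = z"
  using frob2[of z] by (simp add: power_mult[symmetric] power2_eq_square)

lemma key:
  fixes \<nu> :: "(nat \<Rightarrow> 'a) \<Rightarrow> 'k::field" and \<psi> :: "'a \<Rightarrow> 'k"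
  assumes ac: "additive_character \<psi>" and cond: "has_conductor_q2 q \<psi>"
    and chi: "is_character_on mul (H' q h) \<nu>"
    and nu0: "\<forall>z\<in>H0' h. \<nu> z = \<psi> (z (2*(h-1)))"
    and gU: "g \<in> U_carrier h" and gn: "g \<notin> H' q h"
  shows "\<exists>x\<in>H' q h. \<exists>y\<in>H' q h. mul g x = mul y g \<and> \<nu> x \<noteq> \<nu> y"
proof -
  let ?N = "2*(h-1)"
  obtain x0 where x0: "\<psi> (x0 ^ q) \<noteq> \<psi> x0" using cond by (auto simp: has_conductor_q2_def)
  define c where "c = x0 ^ q - x0"
  have psic: "\<psi> c \<noteq> 1"
  proof
    assume "\<psi> c = 1"
    moreover have "\<psi> (x0 ^ q) = \<psi> c * \<psi> x0"
    proof -
      have "\<psi> (x0 ^ q) = \<psi> (c + x0)" by (simp add: c_def)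
      also have "\<dots> = \<psi> c * \<psi> x0" using ac by (simp add: additive_character_def)
      finally show ?thesis .
    qed
    ultimately show False using x0 by simp
  qed
  define P where "P = (\<lambda>i. odd i \<and> i \<le> h-1 \<and> g i \<noteq> 0)"
  have exP: "\<exists>i. P i"
  proof (rule ccontr)
    assume nP: "\<not> (\<exists>i. P i)"
    hence z: "\<And>i. odd i \<Longrightarrow> i \<le> h-1 \<Longrightarrow> g i = 0" by (auto simp: P_def)
    have "g \<in> H' q h"
    proof (cases "odd h")
      case True thus ?thesis using gU z by (auto simp: H'_def)
    next
      case False
      hence "odd (h-1)" using h2 by auto
      hence "g (h-1) = 0" using z by auto
      thus ?thesis using False gU z qpos by (auto simp: H'_def)
    qed
    thus False using gn by simp
  qed
  define j where "j = (LEAST i. P i)"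
  have Pj: "P j" using exP j_def by (metis LeastI)
  have jo: "odd j" and jle: "j \<le> h-1" and bnz: "g j \<noteq> 0" using Pj by (auto simp: P_def)
  have gv: "\<forall>i. odd i \<and> i < j \<longrightarrow> g i = 0"
  proof (intro allI impI)
    fix i assume i: "odd i \<and> i < j"
    hence "\<not> P i" using j_def not_less_Least by blast
    thus "g i = 0" using i jle by (auto simp: P_def)
  qed
  define b where "b = g j"
  have jN: "j \<le> ?N" using jle by auto
  show ?thesis
  proof (cases "j < h-1")
    case True
    define a where "a = x0 / b ^ q"
    define x where "x = (\<lambda>k. if k = 0 then (1::'a) else if k = ?N - j then a else 0)"
    have big: "?N - j > h-1" using True by auto
    have xH: "x \<in> H' q h"
    proof -
      have xU: "x \<in> U_carrier h" by (auto simp: x_def U_carrier_def)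
      have xz: "\<And>i. i \<le> h-1 \<Longrightarrow> i \<noteq> 0 \<Longrightarrow> x i = 0" using big by (auto simp: x_def)
      have "odd i \<Longrightarrow> x i = 0" if "i \<le> h-1" for i using xz[OF that] by (cases "i = 0") auto
      moreover have "x (h-1) = 0" using xz h2 by auto
      ultimately show ?thesis using xU qpos by (auto simp: H'_def)
    qed
    have bq: "b ^ q \<noteq> 0" using bnz b_def by simp
    have "b * a ^ q - a * b ^ q = c"
    proof -
      have "a ^ q = x0 ^ q / b" using frob_twice[of b] by (simp add: a_def power_divide)
      hence "b * a ^ q = x0 ^ q" using bnz b_def by simp
      moreover have "a * b ^ q = x0" using bq by (simp add: a_def)
      ultimately show ?thesis by (simp add: c_def)
    qed
    hence "\<psi> (g j * a ^ q - a * g j ^ q) \<noteq> 1" using psic b_def by simp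
    from key_core[OF gU jo jle gv x_def xH chi nu0 this]
    show ?thesis using xH by blast
  next
    case False
    hence jh: "j = h-1" using jle by simp
    have he: "even h"
    proof (rule ccontr)
      assume "\<not> even h" hence "even (h-1)" using h2 by auto
      thus False using jo jh by simp
    qed
    have bb: "b ^ q \<noteq> b"
    proof
      assume "b ^ q = b"
      hence "g (h-1) ^ q = g (h-1)" using b_def jh by simp
      moreover have "\<forall>i. odd i \<and> i < h-1 \<longrightarrow> g i = 0" using gv jh by simp
      ultimately have "g \<in> H' q h" using gU he by (auto simp: H'_def)
      thus False using gn by simp
    qed
    hence d0: "b - b ^ q \<noteq> 0" by simp
    define a where "a = c / (b - b ^ q)"
    have aq: "a ^ q = a"
    proof -
      have "a ^ q = c ^ q / (b - b ^ q) ^ q" by (simp add: a_def power_divide)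
      also have "c ^ q = x0 - x0 ^ q" using frob_twice[of x0] by (simp add: c_def frob_diff)
      also have "(b - b ^ q) ^ q = b ^ q - b" using frob_twice[of b] by (simp add: frob_diff)
      also have "(x0 - x0 ^ q) / (b ^ q - b) = c / (b - b ^ q)"
      proof -
        have "x0 - x0 ^ q = - c" "b ^ q - b = - (b - b ^ q)" by (simp_all add: c_def)
        thus ?thesis by (simp only: minus_divide_divide)
      qed
      finally show ?thesis by (simp add: a_def)
    qed
    define x where "x = (\<lambda>k. if k = 0 then (1::'a) else if k = ?N - j then a else 0)"
    have Nj: "?N - j = h-1" using jh by simp
    have xH: "x \<in> H' q h"
    proof -
      have xU: "x \<in> U_carrier h" by (auto simp: x_def U_carrier_def)
      have "\<forall>i. odd i \<and> i < h-1 \<longrightarrow> x i = 0" using Nj by (auto simp: x_def)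
      moreover have "x (h-1) = a" using Nj h2 by (simp add: x_def)
      ultimately show ?thesis using xU he aq by (auto simp: H'_def)
    qed
    have "b * a ^ q - a * b ^ q = a * (b - b ^ q)" using aq by (simp add: algebra_simps)
    also have "\<dots> = c" using d0 by (simp add: a_def)
    finally have "b * a ^ q - a * b ^ q = c" .
    hence "\<psi> (g j * a ^ q - a * g j ^ q) \<noteq> 1" using psic b_def by simp
    from key_core[OF gU jo jle gv x_def xH chi nu0 this]
    show ?thesis using xH by blast
  qed
qed

end


lemma finite_field_pow_card:
  fixes x :: "'a :: {field,finite}"
  shows "x ^ card (UNIV :: 'a set) = x"
proof (cases "x = 0")
  case False
  have "x * (\<Prod>y\<in>UNIV-{0}. x * y) = x * x ^ (card (UNIV :: 'a set) - 1) * \<Prod>(UNIV-{0})"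
    by (simp add: prod.distrib mult_ac)
  also have "x * x ^ (card (UNIV :: 'a set) - 1) = x ^ Suc (card (UNIV :: 'a set) - 1)"
    by (subst power_Suc) auto
  also have "Suc (card (UNIV :: 'a set) - 1) = card (UNIV :: 'a set)"
    using finite_UNIV_card_ge_0[where ?'a = 'a] by simp
  also have "(\<Prod>y\<in>UNIV-{0}. x * y) = (\<Prod>y\<in>UNIV-{0}. y)"
    by (rule prod.reindex_bij_witness[of _ "\<lambda>y. y / x" "\<lambda>y. x * y"]) (use False in auto)
  finally show ?thesis
    by simp
qed (use finite_UNIV_card_ge_0[where ?'a = 'a] in auto)

theorem corollary2p4:
  fixes p q n h :: nat
    and \<psi> :: "'a::{field,finite} \<Rightarrow> 'k::field_char_0"
    and \<nu> :: "(nat \<Rightarrow> 'a) \<Rightarrow> 'k"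
  assumes "prime p" and "n \<ge> 1" and "q = p ^ n" and "card (UNIV :: 'a set) = q ^ 2"
    and "h \<ge> 2"
    and "algebraically_closed TYPE('k)"
    and "additive_character \<psi>" and "has_conductor_q2 q \<psi>"
    and "is_character_on (U_mult q h) (H' q h) \<nu>"
    and "\<forall>x\<in>H0' h. \<nu> x = \<psi> (x (2*(h-1)))"
  shows "induced_irreducible (U_mult q h) (U_carrier h) (H' q h) \<nu>"
proof -
  have cpos: "CHAR('a) > 0" by (rule finite_imp_CHAR_pos) simp
  have cprime: "prime CHAR('a)" using prime_CHAR_semidom cpos by blast
  have "CHAR('a) dvd card (UNIV :: 'a set)" by (rule CHAR_dvd_CARD)
  hence "CHAR('a) dvd p ^ (2*n)" using assms(3,4) by (simp add: power_mult[symmetric] mult.commute)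
  hence "CHAR('a) dvd p" using cprime prime_dvd_power by blast
  hence cp: "CHAR('a) = p" using cprime assms(1) primes_dvd_imp_eq by blast
  have fa: "\<And>x y :: 'a. (x + y) ^ q = x ^ q + y ^ q"
    using freshmans_dream'[OF cprime, of q n] cp assms(3) by simp
  have f2: "\<And>x :: 'a. x ^ (q^2) = x"
    using finite_field_pow_card assms(4) by metis
  have qpos: "q > 0" using assms(1,3) prime_gt_0_nat by simp
  interpret UQ q h "TYPE('a)"
    by unfold_locales (use fa f2 qpos assms(5) in auto)
  have "induced_irreducible (mult GU) (carrier GU) (H' q h) \<nu>"
  proof (rule mackey_irred[OF group_GU])
    show "finite (carrier GU)" using finite_U by simp
    show "subgroup (H' q h) GU" by (rule subgroup_H')
    show "is_character_on (mult GU) (H' q h) \<nu>" using assms(9) by simp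
    fix g assume "g \<in> carrier GU" "g \<notin> H' q h"
    thus "\<exists>x\<in>H' q h. \<exists>y\<in>H' q h. g \<otimes>\<^bsub>GU\<^esub> x = y \<otimes>\<^bsub>GU\<^esub> g \<and> \<nu> x \<noteq> \<nu> y"
      using key[OF assms(7,8,9,10)] by simp
  qed
  thus ?thesis by simp
qed

end
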